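(* Let $0<R\le\infty$ and let $\varphi,\psi$ be quasiconcave functions on $(0,R)$. Then there are constants $0<c\le C$ such that $$c\bigl(S_\varphi f(t)+T_\psi f(t)\bigr)\le S_\varphi(f^{**})(t)+T_\psi(f^{**})(t)\le C\bigl(S_\varphi f(t)+T_\psi f(t)\bigr)$$ for every measurable $f$ on $(0,R)$ and every $t\in(0,R)$ if and only if both $\varphi$ and $\psi$ satisfy the $B$-condition.
   Context: For a measurable a.e. finite function $f$ on $(0,R)$, $f^*$ is its non-increasing rearrangement, $f^*(t)=\inf\{\lambda>0: |\{x:|f(x)|>\lambda\}|\le t\}$, and $f^{**}(t)=\frac1t\int_0^t f^*(s)\,ds$. A function $\varphi$ is quasiconcave if $\varphi(t)=0$ iff $t=0$, $\varphi$ is non-decreasing, and $\varphi(t)/t$ is non-increasing on $(0,R)$. It satisfies the $B$-condition if there is $C>0$ with $\frac1t\int_0^t \frac{ds}{\varphi(s)}\le \frac{C}{\varphi(t)}$ for all $t\in(0,R)$. $S_\varphi f(t)=\frac{1}{\varphi(t)}\sup_{0<s<t}\varphi(s)f^*(s)$ and $T_\psi f(t)=\frac{1}{\psi(t)}\sup_{t<s<R}\psi(s)f^*(s)$ for $t\in(0,R)$; $S_\varphi(f^{**})$, $T_\psi(f^{**})$ denote these operators applied to the function $f^{**}$. *)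

theory Defs
  imports "HOL-Analysis.Analysis"
begin

definition ivl :: "ereal \<Rightarrow> real set" where
  "ivl R = {t. 0 < t \<and> ereal t < R}"

definition rearr :: "ereal \<Rightarrow> (real \<Rightarrow> ennreal) \<Rightarrow> real \<Rightarrow> ennreal" where
  "rearr R g t = Inf {lam. 0 < lam \<and> emeasure lborel {x \<in> ivl R. lam < g x} \<le> ennreal t}"

definition fstar :: "ereal \<Rightarrow> (real \<Rightarrow> real) \<Rightarrow> real \<Rightarrow> ennreal" where
  "fstar R f = rearr R (\<lambda>x. ennreal \<bar>f x\<bar>)"

definition fstarstar :: "ereal \<Rightarrow> (real \<Rightarrow> real) \<Rightarrow> real \<Rightarrow> ennreal" where
  "fstarstar R f t = ennreal (1 / t) * (\<integral>\<^sup>+ s\<in>{0<..<t}. fstar R f s \<partial>lborel)"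

definition S_op :: "ereal \<Rightarrow> (real \<Rightarrow> real) \<Rightarrow> (real \<Rightarrow> ennreal) \<Rightarrow> real \<Rightarrow> ennreal" where
  "S_op R \<phi> g t = ennreal (1 / \<phi> t) * (SUP s\<in>{0<..<t}. ennreal (\<phi> s) * rearr R g s)"

definition T_op :: "ereal \<Rightarrow> (real \<Rightarrow> real) \<Rightarrow> (real \<Rightarrow> ennreal) \<Rightarrow> real \<Rightarrow> ennreal" where
  "T_op R \<psi> g t = ennreal (1 / \<psi> t) * (SUP s\<in>{s. t < s \<and> ereal s < R}. ennreal (\<psi> s) * rearr R g s)"

definition quasiconcave_on :: "ereal \<Rightarrow> (real \<Rightarrow> real) \<Rightarrow> bool" where
  "quasiconcave_on R \<phi> \<longleftrightarrow>
     (\<forall>t. 0 \<le> t \<and> ereal t < R \<longrightarrow> (\<phi> t = 0 \<longleftrightarrow> t = 0)) \<and>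
     (\<forall>s t. 0 \<le> s \<and> s \<le> t \<and> ereal t < R \<longrightarrow> \<phi> s \<le> \<phi> t) \<and>
     (\<forall>s t. s \<in> ivl R \<and> t \<in> ivl R \<and> s \<le> t \<longrightarrow> \<phi> t / t \<le> \<phi> s / s)"

definition B_condition :: "ereal \<Rightarrow> (real \<Rightarrow> real) \<Rightarrow> bool" where
  "B_condition R \<phi> \<longleftrightarrow> (\<exists>C>0. \<forall>t\<in>ivl R.
     ennreal (1 / t) * (\<integral>\<^sup>+ s\<in>{0<..<t}. ennreal (1 / \<phi> s) \<partial>lborel) \<le> ennreal (C / \<phi> t))"

end

theory Submission
  imports Defs
begin


lemma ivl_sets[simp]: "ivl R \<in> sets lborel"
proof -
  have "is_interval (ivl R)" unfolding is_interval_1 ivl_def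
    by auto (meson ereal_less_eq(3) le_less_trans)
  then show ?thesis using real_interval_borel_measurable by simp
qed

lemma level_sets_antitone:
  fixes G :: "real \<Rightarrow> ennreal"
  assumes "\<forall>x y. x \<in> ivl R \<longrightarrow> y \<in> ivl R \<longrightarrow> x \<le> y \<longrightarrow> G y \<le> G x"
  shows "{y\<in>ivl R. lam < G y} \<in> sets lborel"
proof -
  have "is_interval {y\<in>ivl R. lam < G y}" unfolding is_interval_1
  proof (intro ballI allI impI)
    fix a b x assume a: "a \<in> {y\<in>ivl R. lam < G y}" and b: "b \<in> {y\<in>ivl R. lam < G y}"
      and x: "a \<le> x \<and> x \<le> b"
    have "x \<in> ivl R" using a b x unfolding ivl_def
      by auto (meson ereal_less_eq(3) le_less_trans)
    moreover have "G b \<le> G x" using assms b x \<open>x \<in> ivl R\<close> by auto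
    ultimately show "x \<in> {y\<in>ivl R. lam < G y}" using b by (auto intro: less_le_trans)
  qed
  then show ?thesis using real_interval_borel_measurable by simp
qed

lemma antitone_measurable:
  fixes f :: "real \<Rightarrow> ennreal"
  assumes "\<And>x y. x \<le> y \<Longrightarrow> f y \<le> f x"
  shows "f \<in> borel_measurable lborel"
proof (rule borel_measurableI_greater)
  fix y
  have "is_interval {x. y < f x}" unfolding is_interval_1
    using assms by (auto intro: less_le_trans)
  then show "{x \<in> space lborel. y < f x} \<in> sets lborel"
    using real_interval_borel_measurable by simp
qed

lemma rearr_antimono:
  assumes "s \<le> s'"
  shows "rearr R g s' \<le> rearr R g s"
  unfolding rearr_def
  by (rule Inf_superset_mono) (auto intro: order_trans ennreal_leI[OF assms])

lemma rearr_le: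
  assumes anti: "\<forall>x y. x \<in> ivl R \<longrightarrow> y \<in> ivl R \<longrightarrow> x \<le> y \<longrightarrow> g y \<le> g x"
    and s: "s \<in> ivl R"
  shows "rearr R g s \<le> g s"
proof (rule dense_ge)
  fix lam assume lam: "g s < lam"
  have sub: "{x \<in> ivl R. lam < g x} \<subseteq> {0<..<s}"
  proof
    fix x assume x: "x \<in> {x \<in> ivl R. lam < g x}"
    have "x < s"
    proof (rule ccontr)
      assume "\<not> x < s"
      then have "g x \<le> g s" using anti x s by auto
      then show False using x lam by auto
    qed
    then show "x \<in> {0<..<s}" using x unfolding ivl_def by auto
  qed
  have "emeasure lborel {x \<in> ivl R. lam < g x} \<le> emeasure lborel {0<..<s}"
    by (rule emeasure_mono[OF sub]) simp
  also have "\<dots> = ennreal s" using s unfolding ivl_def by simp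
  finally have "lam \<in> {lam. 0 < lam \<and> emeasure lborel {x \<in> ivl R. lam < g x} \<le> ennreal s}"
    using lam by (auto intro: le_less_trans[OF zero_le])
  then show "rearr R g s \<le> lam" unfolding rearr_def by (rule Inf_lower)
qed

lemma rearr_ge:
  assumes anti: "\<forall>x y. x \<in> ivl R \<longrightarrow> y \<in> ivl R \<longrightarrow> x \<le> y \<longrightarrow> g y \<le> g x"
    and s': "s' \<in> ivl R" and x: "0 < x" "x < s'"
  shows "g s' \<le> rearr R g x"
  unfolding rearr_def
proof (rule Inf_greatest)
  fix lam assume "lam \<in> {lam. 0 < lam \<and> emeasure lborel {x \<in> ivl R. lam < g x} \<le> ennreal x}"
  then have lm: "emeasure lborel {x \<in> ivl R. lam < g x} \<le> ennreal x" by auto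
  show "g s' \<le> lam"
  proof (rule ccontr)
    assume "\<not> g s' \<le> lam"
    then have lt: "lam < g s'" by simp
    have sub: "{0<..s'} \<subseteq> {x \<in> ivl R. lam < g x}"
    proof
      fix y assume y: "y \<in> {0<..s'}"
      then have "y \<in> ivl R" using s' unfolding ivl_def
        by auto (meson ereal_less_eq(3) le_less_trans)
      then have "g s' \<le> g y" using anti y s' by auto
      then show "y \<in> {x \<in> ivl R. lam < g x}" using lt \<open>y \<in> ivl R\<close> by auto
    qed
    have "ennreal s' = emeasure lborel {0<..s'}" using s' unfolding ivl_def by simp
    also have "\<dots> \<le> emeasure lborel {x \<in> ivl R. lam < g x}"
      by (rule emeasure_mono[OF sub level_sets_antitone[OF anti]])
    also have "\<dots> \<le> ennreal x" by (rule lm)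
    finally have "s' \<le> x" using x by (simp add: ennreal_le_iff2)
    then show False using x by simp
  qed
qed




definition ffsg :: "ereal \<Rightarrow> (real \<Rightarrow> ennreal) \<Rightarrow> real \<Rightarrow> ennreal" where
  "ffsg R g t = ennreal (1 / t) * (\<integral>\<^sup>+ s\<in>{0<..<t}. rearr R g s \<partial>lborel)"

lemma fstarstar_eq: "fstarstar R f = ffsg R (\<lambda>x. ennreal \<bar>f x\<bar>)"
  unfolding fstarstar_def ffsg_def fstar_def by (rule ext) simp

lemma rearr_meas[measurable]: "rearr R g \<in> borel_measurable lborel"
  by (rule antitone_measurable) (rule rearr_antimono)

lemma int_const_Ioo:
  assumes "0 \<le> a" "a \<le> b"
  shows "(\<integral>\<^sup>+ s\<in>{a<..<b}. c \<partial>lborel) = c * ennreal (b - a)"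
  using assms by (simp add: nn_integral_cmult_indicator)

lemma rearr_le_ffsg:
  assumes "0 < x"
  shows "rearr R g x \<le> ffsg R g x"
proof -
  have "(\<integral>\<^sup>+ s\<in>{0<..<x}. rearr R g x \<partial>lborel) \<le> (\<integral>\<^sup>+ s\<in>{0<..<x}. rearr R g s \<partial>lborel)"
    by (intro nn_integral_mono) (auto split: split_indicator intro: rearr_antimono mult_right_mono)
  then have "rearr R g x * ennreal x \<le> (\<integral>\<^sup>+ s\<in>{0<..<x}. rearr R g s \<partial>lborel)"
    using assms int_const_Ioo[of 0 x] by simp
  then have "ennreal (1/x) * (rearr R g x * ennreal x) \<le> ffsg R g x"
    unfolding ffsg_def by (rule mult_left_mono) simp
  moreover have "ennreal (1/x) * (rearr R g x * ennreal x) = rearr R g x"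
  proof -
    have "ennreal (1/x) * (rearr R g x * ennreal x) = rearr R g x * (ennreal (1/x) * ennreal x)"
      by (simp add: ac_simps)
    also have "ennreal (1/x) * ennreal x = 1" using assms by (simp add: ennreal_mult''[symmetric])
    finally show ?thesis by simp
  qed
  ultimately show ?thesis by simp
qed

lemma ffsg_antimono:
  assumes "0 < x" "x \<le> y"
  shows "ffsg R g y \<le> ffsg R g x"
proof -
  let ?F = "rearr R g"
  define I where "I z = (\<integral>\<^sup>+ s\<in>{0<..<z}. ?F s \<partial>lborel)" for z
  have split: "I y = I x + (\<integral>\<^sup>+ s\<in>{x..<y}. ?F s \<partial>lborel)"
  proof -
    have "I y = (\<integral>\<^sup>+ s. ?F s * indicator {0<..<x} s + ?F s * indicator {x..<y} s \<partial>lborel)"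
      unfolding I_def using assms
      by (intro nn_integral_cong) (auto split: split_indicator)
    also have "\<dots> = I x + (\<integral>\<^sup>+ s\<in>{x..<y}. ?F s \<partial>lborel)"
      unfolding I_def by (rule nn_integral_add) auto
    finally show ?thesis .
  qed
  have "(\<integral>\<^sup>+ s\<in>{x..<y}. ?F s \<partial>lborel) \<le> (\<integral>\<^sup>+ s\<in>{x..<y}. ?F x \<partial>lborel)"
    by (intro nn_integral_mono) (auto split: split_indicator intro: rearr_antimono)
  also have "\<dots> = ?F x * ennreal (y - x)" using assms by (simp add: nn_integral_cmult_indicator)
  also have "\<dots> \<le> (ennreal (1/x) * I x) * ennreal (y - x)"
    using rearr_le_ffsg[OF assms(1), of R g] unfolding ffsg_def I_def by (rule mult_right_mono) simp
  finally have "I y \<le> I x + (ennreal (1/x) * I x) * ennreal (y - x)" using split by simp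
  also have "\<dots> = I x * (1 + ennreal ((y - x) / x))"
    using assms by (simp add: distrib_left ennreal_mult''[symmetric] ac_simps)
  also have "1 + ennreal ((y - x) / x) = ennreal (y / x)"
  proof -
    have "y/x = 1 + (y-x)/x" using assms by (simp add: field_simps)
    then show ?thesis using assms by (simp add: ennreal_plus)
  qed
  finally have Iy: "I y \<le> I x * ennreal (y / x)" .
  have "ffsg R g y = ennreal (1/y) * I y" unfolding ffsg_def I_def by simp
  also have "\<dots> \<le> ennreal (1/y) * (I x * ennreal (y / x))" by (rule mult_left_mono[OF Iy]) simp
  also have "\<dots> = I x * (ennreal (1/y) * ennreal (y/x))" by (simp add: ac_simps)
  also have "ennreal (1/y) * ennreal (y/x) = ennreal (1/x)"
    using assms by (simp add: ennreal_mult''[symmetric])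
  finally show ?thesis unfolding ffsg_def I_def by (simp add: ac_simps)
qed




lemma rearr_ge_level:
  assumes meas: "\<And>lam. {y\<in>ivl R. lam < g y} \<in> sets lborel"
    and lt: "ennreal x < emeasure lborel {y\<in>ivl R. l < g y}"
  shows "l \<le> rearr R g x"
  unfolding rearr_def
proof (rule Inf_greatest)
  fix lam assume "lam \<in> {lam. 0 < lam \<and> emeasure lborel {x \<in> ivl R. lam < g x} \<le> ennreal x}"
  then have lm: "emeasure lborel {y \<in> ivl R. lam < g y} \<le> ennreal x" by auto
  show "l \<le> lam"
  proof (rule ccontr)
    assume "\<not> l \<le> lam"
    then have "lam < l" by simp
    then have "{y\<in>ivl R. l < g y} \<subseteq> {y\<in>ivl R. lam < g y}" by auto
    then have "emeasure lborel {y\<in>ivl R. l < g y} \<le> emeasure lborel {y\<in>ivl R. lam < g y}"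
      by (rule emeasure_mono) (rule meas)
    then show False using lm lt by simp
  qed
qed

lemma ffsg_anti_ivl: "\<forall>x y. x \<in> ivl R \<longrightarrow> y \<in> ivl R \<longrightarrow> x \<le> y \<longrightarrow> ffsg R g y \<le> ffsg R g x"
  unfolding ivl_def by (auto intro: ffsg_antimono)

lemma exists_between:
  assumes "s \<in> ivl R" "ennreal s < m"
  shows "\<exists>s2. s < s2 \<and> ereal s2 < R \<and> ennreal s2 \<le> m"
proof -
  from assms(1) have "ereal s < R" "0 < s" unfolding ivl_def by auto
  then obtain z where z: "ereal s < z" "z < R" using dense by blast
  then have zr: "ereal (real_of_ereal z) = z" by (cases z) auto
  from assms(2) obtain w where w: "ennreal s < w" "w < m" using dense by blast
  then have wr: "w = ennreal (enn2real w)" "s < enn2real w"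
    using \<open>0 < s\<close> by (cases w; auto simp: ennreal_less_iff)+
  define s2 where "s2 = min (real_of_ereal z) (enn2real w)"
  have "ereal s < ereal (real_of_ereal z)" using z(1) by (subst zr)
  then have "s < real_of_ereal z" by simp
  then have "s < s2" unfolding s2_def using wr by auto
  moreover have "ereal s2 < R" unfolding s2_def using zr z
    by (metis min.cobounded1 ereal_less_eq(3) le_less_trans)
  moreover have "ennreal s2 \<le> m" unfolding s2_def using w wr
    by (metis ennreal_leI less_imp_le min.cobounded2 order_trans)
  ultimately show ?thesis by blast
qed

lemma rearr_le_rearr_ffsg:
  assumes meas: "\<And>lam. {y\<in>ivl R. lam < g y} \<in> sets lborel"
    and s: "s \<in> ivl R"
  shows "rearr R g s \<le> rearr R (ffsg R g) s"
  unfolding rearr_def[of R "ffsg R g"]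
proof (rule Inf_greatest)
  fix lam assume "lam \<in> {lam. 0 < lam \<and> emeasure lborel {x \<in> ivl R. lam < ffsg R g x} \<le> ennreal s}"
  then have lam0: "0 < lam" and lm: "emeasure lborel {x \<in> ivl R. lam < ffsg R g x} \<le> ennreal s" by auto
  show "rearr R g s \<le> lam"
  proof (rule ccontr)
    assume "\<not> rearr R g s \<le> lam"
    then have "lam < rearr R g s" by simp
    then obtain l2 where l2: "lam < l2" "l2 < rearr R g s" using dense by blast
    have "l2 \<notin> {lam. 0 < lam \<and> emeasure lborel {x \<in> ivl R. lam < g x} \<le> ennreal s}"
    proof
      assume "l2 \<in> {lam. 0 < lam \<and> emeasure lborel {x \<in> ivl R. lam < g x} \<le> ennreal s}"
      then have "rearr R g s \<le> l2" unfolding rearr_def by (rule Inf_lower)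
      then show False using l2 by simp
    qed
    then have big: "ennreal s < emeasure lborel {x \<in> ivl R. l2 < g x}" using l2 lam0 by auto
    obtain s2 where s2: "s < s2" "ereal s2 < R" "ennreal s2 \<le> emeasure lborel {x \<in> ivl R. l2 < g x}"
      using exists_between[OF s big] by blast
    have sub: "{0<..<s2} \<subseteq> {x \<in> ivl R. lam < ffsg R g x}"
    proof
      fix x assume x: "x \<in> {0<..<s2}"
      then have xi: "x \<in> ivl R" using s2 unfolding ivl_def by auto (meson ereal_less_eq(3) less_imp_le le_less_trans)
      have "ennreal x < ennreal s2" using x by (auto simp: ennreal_less_iff)
      then have "ennreal x < emeasure lborel {x \<in> ivl R. l2 < g x}" using s2(3) by simp
      then have "l2 \<le> rearr R g x" by (rule rearr_ge_level[OF meas])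
      also have "\<dots> \<le> ffsg R g x" using x by (intro rearr_le_ffsg) simp
      finally show "x \<in> {x \<in> ivl R. lam < ffsg R g x}" using xi l2 by auto
    qed
    have "ennreal s2 = emeasure lborel {0<..<s2}" using s s2 unfolding ivl_def by simp
    also have "\<dots> \<le> emeasure lborel {x \<in> ivl R. lam < ffsg R g x}"
      by (rule emeasure_mono[OF sub level_sets_antitone[OF ffsg_anti_ivl]])
    also have "\<dots> \<le> ennreal s" by (rule lm)
    finally have "s2 \<le> s" using s unfolding ivl_def by (simp add: ennreal_le_iff2)
    then show False using s2 by simp
  qed
qed




lemma ereal_lt_trans: "s \<le> t \<Longrightarrow> ereal t < R \<Longrightarrow> ereal s < R"
  by (meson ereal_less_eq(3) le_less_trans)

lemma qc_mono:
  assumes "quasiconcave_on R \<phi>" "0 \<le> s" "s \<le> t" "ereal t < R"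
  shows "\<phi> s \<le> \<phi> t"
  using assms unfolding quasiconcave_on_def by (metis (no_types))

lemma qc_pos:
  assumes q: "quasiconcave_on R \<phi>" and t: "t \<in> ivl R"
  shows "0 < \<phi> t"
proof -
  have tt: "0 < t" "ereal t < R" using t unfolding ivl_def by auto
  then have R0: "ereal 0 < R" using ereal_less_eq(3)[of 0 t] by (meson less_imp_le le_less_trans)
  have "\<phi> 0 = 0" using q R0 unfolding quasiconcave_on_def by auto
  moreover have "\<phi> 0 \<le> \<phi> t" using qc_mono[OF q, of 0 t] tt by auto
  moreover have "\<phi> t \<noteq> 0" using q tt unfolding quasiconcave_on_def by auto
  ultimately show ?thesis by simp
qed

lemma qc_ratio:
  assumes q: "quasiconcave_on R \<phi>" and "s \<in> ivl R" "t \<in> ivl R" "s \<le> t"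
  shows "\<phi> t / t \<le> \<phi> s / s"
  using assms unfolding quasiconcave_on_def by (metis (no_types))

lemma qc_ratio':
  assumes q: "quasiconcave_on R \<phi>" and s: "s \<in> ivl R" and t: "t \<in> ivl R" and st: "s \<le> t"
  shows "\<phi> t * s \<le> \<phi> s * t"
proof -
  have "0 < s" "0 < t" using s t unfolding ivl_def by auto
  with qc_ratio[OF assms] show ?thesis by (simp add: field_simps)
qed

lemma ivl_down: "t \<in> ivl R \<Longrightarrow> 0 < s \<Longrightarrow> s \<le> t \<Longrightarrow> s \<in> ivl R"
  unfolding ivl_def by (auto intro: ereal_lt_trans)

lemma qc_half:
  assumes q: "quasiconcave_on R \<phi>" and t: "t \<in> ivl R"
  shows "\<phi> t \<le> 2 * \<phi> (t/2)"
proof -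
  have t0: "0 < t" using t unfolding ivl_def by auto
  have h: "t/2 \<in> ivl R" using t0 by (intro ivl_down[OF t]) auto
  from qc_ratio'[OF q h t] t0 show ?thesis by simp
qed

definition clampinv :: "(real \<Rightarrow> real) \<Rightarrow> real \<Rightarrow> real \<Rightarrow> real \<Rightarrow> real" where
  "clampinv \<phi> lo a x = indicator {0<..<a} x * (1 / \<phi> (max lo (min x a)))"

lemma clampinv_meas:
  assumes q: "quasiconcave_on R \<phi>" and "0 \<le> lo" "lo \<le> a" "ereal a < R"
  shows "clampinv \<phi> lo a \<in> borel_measurable borel"
proof -
  have "mono (\<lambda>x. \<phi> (max lo (min x a)))"
  proof
    fix x y :: real assume "x \<le> y"
    then show "\<phi> (max lo (min x a)) \<le> \<phi> (max lo (min y a))"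
      using assms(2-4) by (intro qc_mono[OF q]) (auto simp: max_def min_def intro: ereal_lt_trans)
  qed
  then have "(\<lambda>x. \<phi> (max lo (min x a))) \<in> borel_measurable borel" by (rule borel_measurable_mono)
  then show ?thesis unfolding clampinv_def by measurable
qed

lemma clampinv_in: "0 < x \<Longrightarrow> x < a \<Longrightarrow> clampinv \<phi> lo a x = 1 / \<phi> (max lo x)"
  unfolding clampinv_def by simp

lemma clampinv_out: "\<not> (0 < x \<and> x < a) \<Longrightarrow> clampinv \<phi> lo a x = 0"
  unfolding clampinv_def by simp

lemma clampinv_ennreal_meas:
  assumes q: "quasiconcave_on R \<phi>" and "0 \<le> lo" "lo \<le> a" "ereal a < R"
  shows "(\<lambda>x. ennreal (clampinv \<phi> lo a x)) \<in> borel_measurable lborel"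
  using clampinv_meas[OF assms] by simp

text \<open>integral of 1/phi over a subinterval equals that of the measurable surrogate\<close>
lemma int_clamp:
  assumes "0 \<le> b" "b \<le> a" "b' \<le> a"
  shows "(\<integral>\<^sup>+ s\<in>{b<..<b'}. ennreal (1 / \<phi> s) \<partial>lborel) = (\<integral>\<^sup>+ s\<in>{b<..<b'}. ennreal (clampinv \<phi> 0 a s) \<partial>lborel)"
  using assms by (intro nn_integral_cong) (auto split: split_indicator simp: clampinv_in)




lemma ennreal_cancel_mult:
  assumes "0 < p"
  shows "ennreal p * (ennreal (1/p) * x) = x" "ennreal (1/p) * (ennreal p * x) = x"
proof -
  have e: "ennreal p * ennreal (1/p) = 1" using assms by (subst ennreal_mult''[symmetric]) auto
  have "ennreal p * (ennreal (1/p) * x) = (ennreal p * ennreal (1/p)) * x" by (rule mult.assoc[symmetric])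
  then show "ennreal p * (ennreal (1/p) * x) = x" using e by simp
  have "ennreal (1/p) * (ennreal p * x) = (ennreal p * ennreal (1/p)) * x" by (simp add: ac_simps)
  then show "ennreal (1/p) * (ennreal p * x) = x" using e by simp
qed

lemma B_int_bound:
  assumes B: "\<forall>t\<in>ivl R. ennreal (1 / t) * (\<integral>\<^sup>+ s\<in>{0<..<t}. ennreal (1 / \<phi> s) \<partial>lborel) \<le> ennreal (C / \<phi> t)"
    and s: "s \<in> ivl R"
  shows "(\<integral>\<^sup>+ u\<in>{0<..<s}. ennreal (1 / \<phi> u) \<partial>lborel) \<le> ennreal s * ennreal (C / \<phi> s)"
proof -
  have s0: "0 < s" using s unfolding ivl_def by auto
  have "ennreal s * (ennreal (1 / s) * (\<integral>\<^sup>+ u\<in>{0<..<s}. ennreal (1 / \<phi> u) \<partial>lborel)) \<le> ennreal s * ennreal (C / \<phi> s)"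
    using B s by (intro mult_left_mono) auto
  then show ?thesis using ennreal_cancel_mult(1)[OF s0] by simp
qed

lemma int_scaled_bound:
  assumes q: "quasiconcave_on R \<phi>" and a: "a \<in> ivl R"
    and le: "\<And>u. 0 < u \<Longrightarrow> u < a \<Longrightarrow> F u * indicator A u \<le> K * ennreal (1 / \<phi> u)"
    and A: "A \<subseteq> {0<..<a}"
  shows "(\<integral>\<^sup>+ u\<in>A. F u \<partial>lborel) \<le> K * (\<integral>\<^sup>+ u\<in>{0<..<a}. ennreal (1 / \<phi> u) \<partial>lborel)"
proof -
  have a0: "0 < a" "ereal a < R" using a unfolding ivl_def by auto
  have "(\<integral>\<^sup>+ u\<in>A. F u \<partial>lborel) \<le> (\<integral>\<^sup>+ u. K * (ennreal (clampinv \<phi> 0 a u) * indicator {0<..<a} u) \<partial>lborel)"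
  proof (intro nn_integral_mono)
    fix u :: real
    show "F u * indicator A u \<le> K * (ennreal (clampinv \<phi> 0 a u) * indicator {0<..<a} u)"
    proof (cases "0 < u \<and> u < a")
      case True
      then show ?thesis using le[of u] by (simp add: clampinv_in)
    next
      case False
      then have "u \<notin> A" using A by auto
      then show ?thesis by simp
    qed
  qed
  also have "\<dots> = K * (\<integral>\<^sup>+ u. ennreal (clampinv \<phi> 0 a u) * indicator {0<..<a} u \<partial>lborel)"
    using clampinv_ennreal_meas[OF q, of 0 a] a0 by (intro nn_integral_cmult) auto
  also have "(\<integral>\<^sup>+ u. ennreal (clampinv \<phi> 0 a u) * indicator {0<..<a} u \<partial>lborel) = (\<integral>\<^sup>+ u\<in>{0<..<a}. ennreal (1 / \<phi> u) \<partial>lborel)"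
    using int_clamp[of 0 a a \<phi>] a0 by simp
  finally show ?thesis .
qed




lemma ennreal_pC: "0 < p \<Longrightarrow> 0 \<le> C \<Longrightarrow> ennreal p * ennreal (C/p) = ennreal C"
  by (subst ennreal_mult''[symmetric]) auto

lemma ennreal_Cp: "0 \<le> C \<Longrightarrow> 0 < p \<Longrightarrow> ennreal (C/p) = ennreal C * ennreal (1/p)"
  by (subst ennreal_mult''[symmetric]) auto

lemma upper_S:
  fixes g :: "real \<Rightarrow> ennreal"
  assumes q\<phi>: "quasiconcave_on R \<phi>"
    and C\<phi>: "C\<phi> > 0" "\<forall>t\<in>ivl R. ennreal (1/t) * (\<integral>\<^sup>+ s\<in>{0<..<t}. ennreal (1/\<phi> s) \<partial>lborel) \<le> ennreal (C\<phi>/\<phi> t)"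
    and t: "t \<in> ivl R"
  shows "S_op R \<phi> (ffsg R g) t \<le> ennreal C\<phi> * S_op R \<phi> g t"
    and "ffsg R g t \<le> ennreal C\<phi> * S_op R \<phi> g t"
proof -
  define Ss where "Ss = (SUP s\<in>{0<..<t}. ennreal (\<phi> s) * rearr R g s)"
  have Sg: "S_op R \<phi> g t = ennreal (1/\<phi> t) * Ss" unfolding S_op_def Ss_def ..
  have t0: "0 < t" "ereal t < R" using t unfolding ivl_def by auto
  have E0: "rearr R g u \<le> Ss * ennreal (1/\<phi> u)" if u: "0 < u" "u < t" for u
  proof -
    have ui: "u \<in> ivl R" using u by (intro ivl_down[OF t]) auto
    have "ennreal (\<phi> u) * rearr R g u \<le> Ss" unfolding Ss_def by (rule SUP_upper) (use u in auto)
    then have "ennreal (1/\<phi> u) * (ennreal (\<phi> u) * rearr R g u) \<le> ennreal (1/\<phi> u) * Ss"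
      by (rule mult_left_mono) simp
    moreover have "ennreal (1/\<phi> u) * (ennreal (\<phi> u) * rearr R g u) = rearr R g u"
      by (rule ennreal_cancel_mult(2)[OF qc_pos[OF q\<phi> ui]])
    ultimately have "rearr R g u \<le> ennreal (1/\<phi> u) * Ss" by simp
    then show ?thesis by (simp add: mult.commute)
  qed
  have E2: "ffsg R g s \<le> Ss * ennreal (C\<phi>/\<phi> s)" if s: "0 < s" "s \<le> t" for s
  proof -
    have si: "s \<in> ivl R" using s by (intro ivl_down[OF t]) auto
    have "(\<integral>\<^sup>+ u\<in>{0<..<s}. rearr R g u \<partial>lborel) \<le> Ss * (\<integral>\<^sup>+ u\<in>{0<..<s}. ennreal (1/\<phi> u) \<partial>lborel)"
    proof (rule int_scaled_bound[OF q\<phi> si])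
      fix u :: real assume u: "0 < u" "u < s"
      then show "rearr R g u * indicator {0<..<s} u \<le> Ss * ennreal (1 / \<phi> u)"
        using E0[of u] s by simp
    qed simp
    also have "\<dots> \<le> Ss * (ennreal s * ennreal (C\<phi>/\<phi> s))"
      by (rule mult_left_mono[OF B_int_bound[OF C\<phi>(2) si]]) simp
    finally have I: "(\<integral>\<^sup>+ u\<in>{0<..<s}. rearr R g u \<partial>lborel) \<le> Ss * (ennreal s * ennreal (C\<phi>/\<phi> s))" .
    have "ffsg R g s = ennreal (1/s) * (\<integral>\<^sup>+ u\<in>{0<..<s}. rearr R g u \<partial>lborel)" unfolding ffsg_def ..
    also have "\<dots> \<le> ennreal (1/s) * (Ss * (ennreal s * ennreal (C\<phi>/\<phi> s)))"
      by (rule mult_left_mono[OF I]) simp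
    also have "\<dots> = Ss * (ennreal (1/s) * (ennreal s * ennreal (C\<phi>/\<phi> s)))" by (simp add: ac_simps)
    also have "\<dots> = Ss * ennreal (C\<phi>/\<phi> s)" using ennreal_cancel_mult(2)[OF s(1)] by simp
    finally show ?thesis .
  qed
  have "(SUP s\<in>{0<..<t}. ennreal (\<phi> s) * rearr R (ffsg R g) s) \<le> ennreal C\<phi> * Ss"
  proof (rule SUP_least)
    fix s assume s: "s \<in> {0<..<t}"
    have si: "s \<in> ivl R" using s by (intro ivl_down[OF t]) auto
    have "rearr R (ffsg R g) s \<le> ffsg R g s" by (rule rearr_le[OF ffsg_anti_ivl si])
    also have "\<dots> \<le> Ss * ennreal (C\<phi>/\<phi> s)" using s by (intro E2) auto
    finally have "ennreal (\<phi> s) * rearr R (ffsg R g) s \<le> ennreal (\<phi> s) * (Ss * ennreal (C\<phi>/\<phi> s))"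
      by (rule mult_left_mono) simp
    also have "\<dots> = Ss * (ennreal (\<phi> s) * ennreal (C\<phi>/\<phi> s))" by (simp add: ac_simps)
    also have "\<dots> = Ss * ennreal C\<phi>" using ennreal_pC[OF qc_pos[OF q\<phi> si], of C\<phi>] C\<phi>(1) by simp
    finally show "ennreal (\<phi> s) * rearr R (ffsg R g) s \<le> ennreal C\<phi> * Ss" by (simp add: ac_simps)
  qed
  then have "ennreal (1/\<phi> t) * (SUP s\<in>{0<..<t}. ennreal (\<phi> s) * rearr R (ffsg R g) s) \<le> ennreal (1/\<phi> t) * (ennreal C\<phi> * Ss)"
    by (rule mult_left_mono) simp
  then show "S_op R \<phi> (ffsg R g) t \<le> ennreal C\<phi> * S_op R \<phi> g t"
    unfolding Sg by (simp add: S_op_def ac_simps)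
  have "ffsg R g t \<le> Ss * ennreal (C\<phi>/\<phi> t)" using t0 by (intro E2) auto
  also have "\<dots> = ennreal C\<phi> * S_op R \<phi> g t"
    unfolding Sg using ennreal_Cp[of C\<phi> "\<phi> t"] C\<phi>(1) qc_pos[OF q\<phi> t] by (simp add: ac_simps)
  finally show "ffsg R g t \<le> ennreal C\<phi> * S_op R \<phi> g t" .
qed




lemma upper_T:
  fixes g :: "real \<Rightarrow> ennreal"
  assumes q\<psi>: "quasiconcave_on R \<psi>"
    and C\<psi>: "C\<psi> > 0" "\<forall>t\<in>ivl R. ennreal (1/t) * (\<integral>\<^sup>+ s\<in>{0<..<t}. ennreal (1/\<psi> s) \<partial>lborel) \<le> ennreal (C\<psi>/\<psi> t)"
    and t: "t \<in> ivl R"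
    and X: "ffsg R g t \<le> X"
  shows "T_op R \<psi> (ffsg R g) t \<le> X + ennreal C\<psi> * T_op R \<psi> g t"
proof -
  define Ts where "Ts = (SUP s\<in>{s. t < s \<and> ereal s < R}. ennreal (\<psi> s) * rearr R g s)"
  have Tg: "T_op R \<psi> g t = ennreal (1/\<psi> t) * Ts" unfolding T_op_def Ts_def ..
  have t0: "0 < t" "ereal t < R" using t unfolding ivl_def by auto
  have pt: "0 < \<psi> t" using qc_pos[OF q\<psi> t] .
  have E3: "rearr R g u \<le> Ts * ennreal (1/\<psi> u)" if u: "t < u" "ereal u < R" for u
  proof -
    have ui: "u \<in> ivl R" using u t0 unfolding ivl_def by auto
    have "ennreal (\<psi> u) * rearr R g u \<le> Ts" unfolding Ts_def by (rule SUP_upper) (use u in auto)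
    then have "ennreal (1/\<psi> u) * (ennreal (\<psi> u) * rearr R g u) \<le> ennreal (1/\<psi> u) * Ts"
      by (rule mult_left_mono) simp
    moreover have "ennreal (1/\<psi> u) * (ennreal (\<psi> u) * rearr R g u) = rearr R g u"
      by (rule ennreal_cancel_mult(2)[OF qc_pos[OF q\<psi> ui]])
    ultimately have "rearr R g u \<le> ennreal (1/\<psi> u) * Ts" by simp
    then show ?thesis by (simp add: mult.commute)
  qed
  have main: "ennreal (\<psi> s) * rearr R (ffsg R g) s \<le> ennreal (\<psi> t) * X + ennreal C\<psi> * Ts"
    if s: "t < s" "ereal s < R" for s
  proof -
    have si: "s \<in> ivl R" using s t0 unfolding ivl_def by auto
    have s0: "0 < s" using s t0 by simp
    have split: "(\<integral>\<^sup>+ u\<in>{0<..<s}. rearr R g u \<partial>lborel)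
        \<le> (\<integral>\<^sup>+ u\<in>{0<..<t}. rearr R g u \<partial>lborel) + (\<integral>\<^sup>+ u\<in>{t<..<s}. rearr R g u \<partial>lborel)"
    proof -
      have "(\<integral>\<^sup>+ u\<in>{0<..<s}. rearr R g u \<partial>lborel)
          \<le> (\<integral>\<^sup>+ u. rearr R g u * indicator {0<..<t} u + rearr R g u * indicator {t<..<s} u \<partial>lborel)"
        using s t0
        by (intro nn_integral_mono_AE eventually_mono[OF AE_lborel_singleton[of t]])
           (auto split: split_indicator)
      also have "\<dots> = (\<integral>\<^sup>+ u\<in>{0<..<t}. rearr R g u \<partial>lborel) + (\<integral>\<^sup>+ u\<in>{t<..<s}. rearr R g u \<partial>lborel)"
        by (rule nn_integral_add) auto
      finally show ?thesis .
    qed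
    have I1: "(\<integral>\<^sup>+ u\<in>{0<..<t}. rearr R g u \<partial>lborel) \<le> ennreal t * X"
    proof -
      have "(\<integral>\<^sup>+ u\<in>{0<..<t}. rearr R g u \<partial>lborel) = ennreal t * ffsg R g t"
        unfolding ffsg_def using ennreal_cancel_mult(1)[OF t0(1)] by simp
      also have "\<dots> \<le> ennreal t * X" by (rule mult_left_mono[OF X]) simp
      finally show ?thesis .
    qed
    have I2: "(\<integral>\<^sup>+ u\<in>{t<..<s}. rearr R g u \<partial>lborel) \<le> Ts * (ennreal s * ennreal (C\<psi>/\<psi> s))"
    proof -
      have "(\<integral>\<^sup>+ u\<in>{t<..<s}. rearr R g u \<partial>lborel) \<le> Ts * (\<integral>\<^sup>+ u\<in>{0<..<s}. ennreal (1/\<psi> u) \<partial>lborel)"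
      proof (rule int_scaled_bound[OF q\<psi> si])
        fix u :: real assume u: "0 < u" "u < s"
        show "rearr R g u * indicator {t<..<s} u \<le> Ts * ennreal (1 / \<psi> u)"
        proof (cases "t < u")
          case True
          then have "ereal u < R" using u s by (meson ereal_lt_trans less_imp_le)
          then show ?thesis using E3[of u] True u by simp
        qed simp
      qed (use t0 in auto)
      also have "\<dots> \<le> Ts * (ennreal s * ennreal (C\<psi>/\<psi> s))"
        by (rule mult_left_mono[OF B_int_bound[OF C\<psi>(2) si]]) simp
      finally show ?thesis .
    qed
    have "ffsg R g s = ennreal (1/s) * (\<integral>\<^sup>+ u\<in>{0<..<s}. rearr R g u \<partial>lborel)" unfolding ffsg_def ..
    also have "\<dots> \<le> ennreal (1/s) * (ennreal t * X + Ts * (ennreal s * ennreal (C\<psi>/\<psi> s)))"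
      by (rule mult_left_mono) (use split I1 I2 add_mono order_trans in blast, simp)
    also have "\<dots> = ennreal (1/s) * ennreal t * X + Ts * (ennreal (1/s) * (ennreal s * ennreal (C\<psi>/\<psi> s)))"
      by (simp add: distrib_left ac_simps)
    also have "\<dots> = ennreal (t/s) * X + Ts * ennreal (C\<psi>/\<psi> s)"
      using ennreal_cancel_mult(2)[OF s0] s0 t0 by (simp add: ennreal_mult''[symmetric])
    finally have F: "ffsg R g s \<le> ennreal (t/s) * X + Ts * ennreal (C\<psi>/\<psi> s)" .
    have "rearr R (ffsg R g) s \<le> ffsg R g s" by (rule rearr_le[OF ffsg_anti_ivl si])
    also note F
    finally have "ennreal (\<psi> s) * rearr R (ffsg R g) s \<le> ennreal (\<psi> s) * (ennreal (t/s) * X + Ts * ennreal (C\<psi>/\<psi> s))"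
      by (rule mult_left_mono) simp
    also have "\<dots> = (ennreal (\<psi> s) * ennreal (t/s)) * X + Ts * (ennreal (\<psi> s) * ennreal (C\<psi>/\<psi> s))"
      by (simp add: distrib_left ac_simps)
    also have "ennreal (\<psi> s) * ennreal (C\<psi>/\<psi> s) = ennreal C\<psi>"
      using ennreal_pC[OF qc_pos[OF q\<psi> si], of C\<psi>] C\<psi>(1) by simp
    also have "ennreal (\<psi> s) * ennreal (t/s) \<le> ennreal (\<psi> t)"
    proof -
      have "\<psi> s * t \<le> \<psi> t * s" using qc_ratio'[OF q\<psi> t si] s by simp
      then have "\<psi> s * (t/s) \<le> \<psi> t" using s0 by (simp add: field_simps)
      moreover have "ennreal (\<psi> s) * ennreal (t/s) = ennreal (\<psi> s * (t/s))"
        using s0 t0 by (simp add: ennreal_mult''[symmetric])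
      ultimately show ?thesis by (simp add: ennreal_leI)
    qed
    finally show ?thesis
      by (rule order_trans) (intro add_mono mult_right_mono, auto simp: ac_simps)
  qed
  have "(SUP s\<in>{s. t < s \<and> ereal s < R}. ennreal (\<psi> s) * rearr R (ffsg R g) s) \<le> ennreal (\<psi> t) * X + ennreal C\<psi> * Ts"
    by (rule SUP_least) (use main in auto)
  then have "ennreal (1/\<psi> t) * (SUP s\<in>{s. t < s \<and> ereal s < R}. ennreal (\<psi> s) * rearr R (ffsg R g) s)
      \<le> ennreal (1/\<psi> t) * (ennreal (\<psi> t) * X + ennreal C\<psi> * Ts)"
    by (rule mult_left_mono) simp
  also have "\<dots> = ennreal (1/\<psi> t) * (ennreal (\<psi> t) * X) + ennreal C\<psi> * (ennreal (1/\<psi> t) * Ts)"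
    by (simp add: distrib_left ac_simps)
  also have "\<dots> = X + ennreal C\<psi> * T_op R \<psi> g t"
    unfolding Tg using ennreal_cancel_mult(2)[OF pt] by simp
  finally show ?thesis unfolding T_op_def .
qed




lemma level_meas_f:
  fixes f :: "real \<Rightarrow> real"
  assumes "f \<in> borel_measurable (restrict_space lborel (ivl R))"
  shows "{y\<in>ivl R. lam < ennreal \<bar>f y\<bar>} \<in> sets lborel"
proof -
  have "(\<lambda>x. ennreal \<bar>f x\<bar>) \<in> borel_measurable (restrict_space lborel (ivl R))"
    using assms by measurable
  then have "{x \<in> space (restrict_space lborel (ivl R)). lam < ennreal \<bar>f x\<bar>} \<in> sets (restrict_space lborel (ivl R))"
    by measurable
  then have "{y\<in>ivl R. lam < ennreal \<bar>f y\<bar>} \<in> sets (restrict_space lborel (ivl R))"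
    by (simp add: space_restrict_space)
  then show ?thesis using ivl_sets[of R] by (subst (asm) sets_restrict_space_iff) auto
qed

lemma final_ineq:
  fixes a b x y :: ennreal
  assumes "x \<le> ennreal A * a" "y \<le> ennreal A * a + ennreal B * b" "0 < A" "0 < B"
  shows "x + y \<le> ennreal (2*A + B + 1) * (a + b)"
proof -
  have "x + y \<le> ennreal A * a + (ennreal A * a + ennreal B * b)" by (rule add_mono[OF assms(1,2)])
  also have "\<dots> = (ennreal A * a + ennreal A * a) + ennreal B * b" by (rule add.assoc[symmetric])
  also have "\<dots> \<le> ennreal (2*A + B + 1) * a + ennreal (2*A + B + 1) * b"
  proof (rule add_mono)
    have "ennreal A * a + ennreal A * a = (ennreal A + ennreal A) * a" by (rule distrib_right[symmetric])
    also have "ennreal A + ennreal A = ennreal (A + A)" using assms by (rule_tac ennreal_plus[symmetric]) auto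
    also have "ennreal (A + A) * a \<le> ennreal (2*A + B + 1) * a" using assms by (intro mult_right_mono ennreal_leI) auto
    finally show "ennreal A * a + ennreal A * a \<le> ennreal (2*A + B + 1) * a" .
    show "ennreal B * b \<le> ennreal (2*A + B + 1) * b" using assms by (intro mult_right_mono ennreal_leI) auto
  qed
  also have "\<dots> = ennreal (2*A + B + 1) * (a + b)" by (rule distrib_left[symmetric])
  finally show ?thesis .
qed

lemma sufficiency:
  assumes q\<phi>: "quasiconcave_on R \<phi>" and q\<psi>: "quasiconcave_on R \<psi>"
    and B\<phi>: "B_condition R \<phi>" and B\<psi>: "B_condition R \<psi>"
  shows "\<exists>c C. 0 < c \<and> c \<le> C \<and>
            (\<forall>f :: real \<Rightarrow> real. f \<in> borel_measurable (restrict_space lborel (ivl R)) \<longrightarrow>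
              (\<forall>t\<in>ivl R.
                 ennreal c * (S_op R \<phi> (\<lambda>x. ennreal \<bar>f x\<bar>) t + T_op R \<psi> (\<lambda>x. ennreal \<bar>f x\<bar>) t)
                   \<le> S_op R \<phi> (fstarstar R f) t + T_op R \<psi> (fstarstar R f) t \<and>
                 S_op R \<phi> (fstarstar R f) t + T_op R \<psi> (fstarstar R f) t
                   \<le> ennreal C * (S_op R \<phi> (\<lambda>x. ennreal \<bar>f x\<bar>) t + T_op R \<psi> (\<lambda>x. ennreal \<bar>f x\<bar>) t)))"
proof -
  obtain A where A: "A > 0" "\<forall>t\<in>ivl R. ennreal (1/t) * (\<integral>\<^sup>+ s\<in>{0<..<t}. ennreal (1/\<phi> s) \<partial>lborel) \<le> ennreal (A/\<phi> t)"
    using B\<phi> unfolding B_condition_def by blast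
  obtain B where B: "B > 0" "\<forall>t\<in>ivl R. ennreal (1/t) * (\<integral>\<^sup>+ s\<in>{0<..<t}. ennreal (1/\<psi> s) \<partial>lborel) \<le> ennreal (B/\<psi> t)"
    using B\<psi> unfolding B_condition_def by blast
  show ?thesis
  proof (intro exI conjI allI impI ballI)
    show "(0::real) < 1" by simp
    show "(1::real) \<le> 2*A + B + 1" using A B by simp
    fix f :: "real \<Rightarrow> real" and t
    assume f: "f \<in> borel_measurable (restrict_space lborel (ivl R))" and t: "t \<in> ivl R"
    define g where "g = (\<lambda>x. ennreal \<bar>f x\<bar>)"
    have ff: "fstarstar R f = ffsg R g" unfolding g_def by (rule fstarstar_eq)
    have lev: "\<And>lam. {y\<in>ivl R. lam < g y} \<in> sets lborel" unfolding g_def using f by (rule level_meas_f)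
    have "S_op R \<phi> g t \<le> S_op R \<phi> (ffsg R g) t"
      unfolding S_op_def
    proof (rule mult_left_mono, rule SUP_subset_mono[OF order_refl])
      fix s assume "s \<in> {0<..<t}"
      then have "s \<in> ivl R" by (intro ivl_down[OF t]) auto
      then show "ennreal (\<phi> s) * rearr R g s \<le> ennreal (\<phi> s) * rearr R (ffsg R g) s"
        by (intro mult_left_mono rearr_le_rearr_ffsg[OF lev]) auto
    qed simp
    moreover have "T_op R \<psi> g t \<le> T_op R \<psi> (ffsg R g) t"
      unfolding T_op_def
    proof (rule mult_left_mono, rule SUP_subset_mono[OF order_refl])
      fix s assume "s \<in> {s. t < s \<and> ereal s < R}"
      then have "s \<in> ivl R" using t unfolding ivl_def by auto
      then show "ennreal (\<psi> s) * rearr R g s \<le> ennreal (\<psi> s) * rearr R (ffsg R g) s"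
        by (intro mult_left_mono rearr_le_rearr_ffsg[OF lev]) auto
    qed simp
    ultimately show "ennreal 1 * (S_op R \<phi> (\<lambda>x. ennreal \<bar>f x\<bar>) t + T_op R \<psi> (\<lambda>x. ennreal \<bar>f x\<bar>) t)
        \<le> S_op R \<phi> (fstarstar R f) t + T_op R \<psi> (fstarstar R f) t"
      unfolding ff g_def[symmetric] by (simp add: add_mono)
    have u1: "S_op R \<phi> (ffsg R g) t \<le> ennreal A * S_op R \<phi> g t" by (rule upper_S(1)[OF q\<phi> A t])
    have u2: "ffsg R g t \<le> ennreal A * S_op R \<phi> g t" by (rule upper_S(2)[OF q\<phi> A t])
    have u3: "T_op R \<psi> (ffsg R g) t \<le> ennreal A * S_op R \<phi> g t + ennreal B * T_op R \<psi> g t"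
      by (rule upper_T[OF q\<psi> B t u2])
    show "S_op R \<phi> (fstarstar R f) t + T_op R \<psi> (fstarstar R f) t
        \<le> ennreal (2*A + B + 1) * (S_op R \<phi> (\<lambda>x. ennreal \<bar>f x\<bar>) t + T_op R \<psi> (\<lambda>x. ennreal \<bar>f x\<bar>) t)"
      unfolding ff g_def[symmetric] by (rule final_ineq[OF u1 u3 A(1) B(1)])
  qed
qed




lemma ennreal_div_le:
  assumes "0 < p" "ennreal p * x \<le> y"
  shows "x \<le> ennreal (1/p) * y"
proof -
  have "ennreal (1/p) * (ennreal p * x) \<le> ennreal (1/p) * y" by (rule mult_left_mono[OF assms(2)]) simp
  then show ?thesis using ennreal_cancel_mult(2)[OF assms(1)] by simp
qed

lemma limit_int:
  fixes h :: "real \<Rightarrow> ennreal"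
  assumes h: "h \<in> borel_measurable lborel" and a: "0 < a"
    and le: "\<And>\<tau>. 0 < \<tau> \<Longrightarrow> \<tau> < a \<Longrightarrow> (\<integral>\<^sup>+ u\<in>{\<tau><..<a}. h u \<partial>lborel) \<le> K"
  shows "(\<integral>\<^sup>+ u\<in>{0<..<a}. h u \<partial>lborel) \<le> K"
proof -
  define A where "A n = {a / real (n+2) <..< a}" for n :: nat
  have incA: "incseq A" unfolding A_def incseq_def
  proof (intro allI impI subsetI)
    fix m n :: nat and x assume mn: "m \<le> n" and x: "x \<in> {a / real (m+2) <..< a}"
    have "a / real (n+2) \<le> a / real (m+2)" using a mn by (intro divide_left_mono) auto
    then show "x \<in> {a / real (n+2) <..< a}" using x by auto
  qed
  have UA: "(\<Union>n. A n) = {0<..<a}"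
  proof
    show "(\<Union>n. A n) \<subseteq> {0<..<a}"
    proof
      fix x assume "x \<in> (\<Union>n. A n)"
      then obtain n where x: "x \<in> A n" by auto
      have "0 < a / real (n+2)" using a by simp
      then show "x \<in> {0<..<a}" using x unfolding A_def by auto
    qed
    show "{0<..<a} \<subseteq> (\<Union>n. A n)"
    proof
      fix x assume x: "x \<in> {0<..<a}"
      obtain n :: nat where n: "a / x < real n" using reals_Archimedean2 by blast
      have "a < real n * x" using n x by (simp add: field_simps)
      then have "a < real (n+2) * x" using x 
      proof -
        have "real n * x \<le> real (n+2) * x" using x by (intro mult_right_mono) auto
        then show ?thesis using \<open>a < real n * x\<close> by linarith
      qed
      then have "a / real (n+2) < x" by (simp add: field_simps)
      then show "x \<in> (\<Union>n. A n)" unfolding A_def using x by auto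
    qed
  qed
  have em: "emeasure (density lborel h) B = (\<integral>\<^sup>+ u\<in>B. h u \<partial>lborel)" if "B \<in> sets lborel" for B
    using emeasure_density[OF h that] by simp
  have "(\<integral>\<^sup>+ u\<in>{0<..<a}. h u \<partial>lborel) = emeasure (density lborel h) (\<Union>n. A n)"
    unfolding UA by (rule em[symmetric]) simp
  also have "\<dots> = (SUP n. emeasure (density lborel h) (A n))"
  proof (rule SUP_emeasure_incseq[symmetric])
    show "range A \<subseteq> sets (density lborel h)" by (auto simp: A_def)
    show "incseq A" by (rule incA)
  qed
  also have "\<dots> \<le> K"
  proof (rule SUP_least)
    fix n
    have "emeasure (density lborel h) (A n) = (\<integral>\<^sup>+ u\<in>A n. h u \<partial>lborel)" by (rule em) (simp add: A_def)
    also have "\<dots> \<le> K"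
    proof -
      have "a / real (n+2) < a / 1" using a by (intro divide_strict_left_mono) auto
      then show ?thesis unfolding A_def using a by (intro le) auto
    qed
    finally show "emeasure (density lborel h) (A n) \<le> K" .
  qed
  finally show ?thesis .
qed

lemma Bcond_of:
  assumes q: "quasiconcave_on R \<phi>" and K: "0 \<le> K"
    and J: "\<And>t. t \<in> ivl R \<Longrightarrow> (\<integral>\<^sup>+ u\<in>{0<..<t/2}. ennreal (1/\<phi> u) \<partial>lborel) \<le> ennreal (K * t / \<phi> t)"
  shows "B_condition R \<phi>"
  unfolding B_condition_def
proof (intro exI[of _ "K + 1"] conjI ballI)
  show "0 < K + 1" using K by simp
  fix t assume t: "t \<in> ivl R"
  have t0: "0 < t" "ereal t < R" using t unfolding ivl_def by auto
  have pt: "0 < \<phi> t" by (rule qc_pos[OF q t])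
  have th: "t/2 \<in> ivl R" using t0 by (intro ivl_down[OF t]) auto
  have ph: "0 < \<phi> (t/2)" by (rule qc_pos[OF q th])
  let ?h = "\<lambda>u. ennreal (clampinv \<phi> 0 t u)"
  have hm: "?h \<in> borel_measurable lborel" using clampinv_ennreal_meas[OF q, of 0 t] t0 by simp
  have "(\<integral>\<^sup>+ u\<in>{0<..<t}. ennreal (1/\<phi> u) \<partial>lborel) = (\<integral>\<^sup>+ u\<in>{0<..<t}. ?h u \<partial>lborel)"
    using int_clamp[of 0 t t \<phi>] t0 by simp
  also have "\<dots> = (\<integral>\<^sup>+ u. ?h u * indicator {0<..<t/2} u + ?h u * indicator {t/2..<t} u \<partial>lborel)"
    using t0 by (intro nn_integral_cong) (auto split: split_indicator)
  also have "\<dots> = (\<integral>\<^sup>+ u\<in>{0<..<t/2}. ?h u \<partial>lborel) + (\<integral>\<^sup>+ u\<in>{t/2..<t}. ?h u \<partial>lborel)"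
    using hm by (intro nn_integral_add) auto
  also have "(\<integral>\<^sup>+ u\<in>{0<..<t/2}. ?h u \<partial>lborel) = (\<integral>\<^sup>+ u\<in>{0<..<t/2}. ennreal (1/\<phi> u) \<partial>lborel)"
    using int_clamp[of 0 t "t/2" \<phi>] t0 by simp
  also have "(\<integral>\<^sup>+ u\<in>{t/2..<t}. ?h u \<partial>lborel) \<le> (\<integral>\<^sup>+ u\<in>{t/2..<t}. ennreal (1/\<phi> (t/2)) \<partial>lborel)"
  proof (intro nn_integral_mono)
    fix u
    show "?h u * indicator {t/2..<t} u \<le> ennreal (1/\<phi> (t/2)) * indicator {t/2..<t} u"
    proof (cases "t/2 \<le> u \<and> u < t")
      case True
      then have "\<phi> (t/2) \<le> \<phi> u" using t0 ereal_lt_trans[of u t R] by (intro qc_mono[OF q]) auto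
      then have "1/\<phi> u \<le> 1/\<phi> (t/2)" using ph by (intro divide_left_mono) auto
      then show ?thesis using True t0 by (simp add: clampinv_in ennreal_leI)
    qed simp
  qed
  also have "\<dots> = ennreal (1/\<phi> (t/2)) * ennreal (t/2)" using t0 by (simp add: nn_integral_cmult_indicator)
  also have "\<dots> = ennreal (t/2 / \<phi> (t/2))" using t0 ph by (simp add: ennreal_mult''[symmetric])
  also have "\<dots> \<le> ennreal (t / \<phi> t)"
  proof (rule ennreal_leI)
    have "\<phi> t \<le> 2 * \<phi> (t/2)" by (rule qc_half[OF q t])
    then show "t/2 / \<phi> (t/2) \<le> t / \<phi> t" using t0 pt ph by (simp add: field_simps)
  qed
  finally have "(\<integral>\<^sup>+ u\<in>{0<..<t}. ennreal (1/\<phi> u) \<partial>lborel)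
      \<le> (\<integral>\<^sup>+ u\<in>{0<..<t/2}. ennreal (1/\<phi> u) \<partial>lborel) + ennreal (t / \<phi> t)"
    by (simp add: add_left_mono)
  also have "\<dots> \<le> ennreal (K * t / \<phi> t) + ennreal (t / \<phi> t)" using J[OF t] by (rule add_right_mono)
  also have "\<dots> = ennreal (K * t / \<phi> t + t / \<phi> t)" using K t0 pt by (intro ennreal_plus[symmetric]) auto
  finally have I: "(\<integral>\<^sup>+ u\<in>{0<..<t}. ennreal (1/\<phi> u) \<partial>lborel) \<le> ennreal (K * t / \<phi> t + t / \<phi> t)" .
  have "ennreal (1/t) * (\<integral>\<^sup>+ u\<in>{0<..<t}. ennreal (1/\<phi> u) \<partial>lborel) \<le> ennreal (1/t) * ennreal (K * t / \<phi> t + t / \<phi> t)"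
    by (rule mult_left_mono[OF I]) simp
  also have "\<dots> = ennreal ((K+1) / \<phi> t)"
  proof -
    have "ennreal (1/t) * ennreal (K * t / \<phi> t + t / \<phi> t) = ennreal (1/t * (K * t / \<phi> t + t / \<phi> t))"
      using K t0 pt by (subst ennreal_mult''[symmetric]) auto
    also have "1/t * (K * t / \<phi> t + t / \<phi> t) = (K+1) / \<phi> t" using t0 pt by (simp add: field_simps)
    finally show ?thesis .
  qed
  finally show "ennreal (1 / t) * (\<integral>\<^sup>+ s\<in>{0<..<t}. ennreal (1 / \<phi> s) \<partial>lborel) \<le> ennreal ((K + 1) / \<phi> t)" .
qed




lemma test_meas:
  assumes q: "quasiconcave_on R \<rho>" and t: "t \<in> ivl R" and lo: "0 \<le> lo" "lo \<le> t"
  shows "clampinv \<rho> lo t \<in> borel_measurable (restrict_space lborel (ivl R))"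
proof -
  have t0: "ereal t < R" using t unfolding ivl_def by auto
  have "clampinv \<rho> lo t \<in> borel_measurable lborel" using clampinv_meas[OF q lo t0] by simp
  then show ?thesis by (rule measurable_restrict_space1)
qed

lemma test_g_in:
  assumes q: "quasiconcave_on R \<rho>" and t: "t \<in> ivl R" and lo: "0 \<le> lo" "lo < t"
    and x: "0 < x" "x < t"
  shows "ennreal \<bar>clampinv \<rho> lo t x\<bar> = ennreal (1 / \<rho> (max lo x))"
proof -
  have "max lo x \<in> ivl R" using x lo by (intro ivl_down[OF t]) auto
  then have "0 < \<rho> (max lo x)" by (rule qc_pos[OF q])
  then show ?thesis using x by (simp add: clampinv_in)
qed

lemma test_g_out:
  "\<not> (0 < x \<and> x < t) \<Longrightarrow> ennreal \<bar>clampinv \<rho> lo t x\<bar> = 0"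
  by (simp add: clampinv_out)

lemma test_anti:
  assumes q: "quasiconcave_on R \<rho>" and t: "t \<in> ivl R" and lo: "0 \<le> lo" "lo < t"
  shows "\<forall>x y. x \<in> ivl R \<longrightarrow> y \<in> ivl R \<longrightarrow> x \<le> y \<longrightarrow>
           ennreal \<bar>clampinv \<rho> lo t y\<bar> \<le> ennreal \<bar>clampinv \<rho> lo t x\<bar>"
proof (intro allI impI)
  fix x y assume x: "x \<in> ivl R" and y: "y \<in> ivl R" and xy: "x \<le> y"
  have x0: "0 < x" using x unfolding ivl_def by auto
  show "ennreal \<bar>clampinv \<rho> lo t y\<bar> \<le> ennreal \<bar>clampinv \<rho> lo t x\<bar>"
  proof (cases "y < t")
    case True
    have mx: "max lo x \<in> ivl R" using x0 lo True xy by (intro ivl_down[OF t]) auto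
    have t0: "ereal t < R" using t unfolding ivl_def by auto
    have r1: "ereal lo < R" by (rule ereal_lt_trans[of lo t R]) (use lo t0 in auto)
    have r2: "ereal y < R" by (rule ereal_lt_trans[of y t R]) (use True t0 in auto)
    have "\<rho> (max lo x) \<le> \<rho> (max lo y)"
      using lo x0 True xy r1 r2 by (intro qc_mono[OF q]) (auto simp: max_def)
    then have "1 / \<rho> (max lo y) \<le> 1 / \<rho> (max lo x)"
      using qc_pos[OF q mx] by (intro divide_left_mono) auto
    then show ?thesis using test_g_in[OF q t lo, of x] test_g_in[OF q t lo, of y] True xy x0
      by (simp add: ennreal_leI)
  next
    case False
    then show ?thesis by (simp add: test_g_out)
  qed
qed

lemma double_bound:
  assumes q: "quasiconcave_on R \<rho>" and t: "t \<in> ivl R"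
    and h: "ennreal (\<rho> (t/2)) * F \<le> ennreal M" and M: "0 \<le> M"
  shows "ennreal (\<rho> t) * F \<le> ennreal (2*M)"
proof -
  have t0: "0 < t" using t unfolding ivl_def by auto
  have th: "t/2 \<in> ivl R" using t0 by (intro ivl_down[OF t]) auto
  have "ennreal (\<rho> t) \<le> ennreal (2 * \<rho> (t/2))" by (rule ennreal_leI[OF qc_half[OF q t]])
  also have "\<dots> = ennreal 2 * ennreal (\<rho> (t/2))" using qc_pos[OF q th] by (simp add: ennreal_mult)
  finally have "ennreal (\<rho> t) * F \<le> (ennreal 2 * ennreal (\<rho> (t/2))) * F" by (rule mult_right_mono) simp
  also have "\<dots> = ennreal 2 * (ennreal (\<rho> (t/2)) * F)" by (simp add: ac_simps)
  also have "\<dots> \<le> ennreal 2 * ennreal M" by (rule mult_left_mono[OF h]) simp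
  also have "\<dots> = ennreal (2*M)" using M by (simp add: ennreal_mult)
  finally show ?thesis .
qed

lemma f_part:
  assumes q: "quasiconcave_on R \<rho>" and t: "t \<in> ivl R" and lo: "0 \<le> lo" "lo < t"
    and h: "ennreal (\<rho> t) * ffsg R (\<lambda>x. ennreal \<bar>clampinv \<rho> lo t x\<bar>) t \<le> ennreal M" and M: "0 \<le> M"
  shows "(\<integral>\<^sup>+ u\<in>{lo<..<t/2}. ennreal (1/\<rho> u) \<partial>lborel) \<le> ennreal (2 * M * t / \<rho> t)"
proof -
  define g where "g = (\<lambda>x. ennreal \<bar>clampinv \<rho> lo t x\<bar>)"
  have t0: "0 < t" "ereal t < R" using t unfolding ivl_def by auto
  have pt: "0 < \<rho> t" by (rule qc_pos[OF q t])
  let ?h = "\<lambda>u. ennreal (clampinv \<rho> 0 t u)"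
  have hm: "?h \<in> borel_measurable lborel" using clampinv_ennreal_meas[OF q, of 0 t] t0 by simp
  define J where "J = (\<integral>\<^sup>+ u\<in>{lo<..<t/2}. ennreal (1/\<rho> u) \<partial>lborel)"
  have J': "J = (\<integral>\<^sup>+ u. ?h u * indicator {lo<..<t/2} u \<partial>lborel)"
    unfolding J_def using int_clamp[of lo t "t/2" \<rho>] lo t0 by simp
  have "(\<integral>\<^sup>+ u. ennreal (1/2) * (?h u * indicator {lo<..<t/2} u) \<partial>lborel)
      \<le> (\<integral>\<^sup>+ u\<in>{0<..<t}. rearr R g u \<partial>lborel)"
  proof (intro nn_integral_mono)
    fix u :: real
    show "ennreal (1/2) * (?h u * indicator {lo<..<t/2} u) \<le> rearr R g u * indicator {0<..<t} u"
    proof (cases "lo < u \<and> u < t/2")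
      case True
      then have u0: "0 < u" "u < t" using lo by auto
      have u2: "2*u \<in> ivl R" using True lo by (intro ivl_down[OF t]) auto
      have ui: "u \<in> ivl R" using u0 by (intro ivl_down[OF t]) auto
      have "\<rho> (2*u) \<le> 2 * \<rho> u" using qc_half[OF q u2] by simp
      then have "1/2 * (1 / \<rho> u) \<le> 1 / \<rho> (2*u)"
        using qc_pos[OF q ui] qc_pos[OF q u2] by (simp add: field_simps)
      then have "ennreal (1/2) * ennreal (1 / \<rho> u) \<le> ennreal (1 / \<rho> (2*u))"
      proof -
        have "ennreal (1/2) * ennreal (1 / \<rho> u) = ennreal (1/2 * (1 / \<rho> u))"
          using qc_pos[OF q ui] by (subst ennreal_mult''[symmetric]) auto
        then show ?thesis using \<open>1/2 * (1 / \<rho> u) \<le> 1 / \<rho> (2*u)\<close> by (simp add: ennreal_leI)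
      qed
      also have "\<dots> = g (2*u)" unfolding g_def using test_g_in[OF q t lo, of "2*u"] True lo by simp
      also have "\<dots> \<le> rearr R g u" unfolding g_def
        by (rule rearr_ge[OF test_anti[OF q t lo] u2]) (use u0 in auto)
      finally show ?thesis using True u0 lo by (simp add: clampinv_in)
    qed simp
  qed
  also have "(\<integral>\<^sup>+ u\<in>{0<..<t}. rearr R g u \<partial>lborel) = ennreal t * ffsg R g t"
    unfolding ffsg_def using ennreal_cancel_mult(1)[OF t0(1)] by simp
  finally have "ennreal (1/2) * J \<le> ennreal t * ffsg R g t"
    unfolding J' using hm by (subst (asm) nn_integral_cmult) auto
  then have "ennreal (\<rho> t) * (ennreal (1/2) * J) \<le> ennreal (\<rho> t) * (ennreal t * ffsg R g t)"
    by (rule mult_left_mono) simp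
  also have "\<dots> = ennreal t * (ennreal (\<rho> t) * ffsg R g t)" by (simp add: ac_simps)
  also have "\<dots> \<le> ennreal t * ennreal M" using h unfolding g_def by (rule mult_left_mono) simp
  finally have fin: "ennreal (\<rho> t) * (ennreal (1/2) * J) \<le> ennreal t * ennreal M" .
  have e1: "ennreal (\<rho> t) * (ennreal (1/2) * J) = ennreal (\<rho> t * (1/2)) * J"
    by (subst ennreal_mult'') (auto simp: mult.assoc)
  have e2: "ennreal t * ennreal M = ennreal (t * M)" using M by (subst ennreal_mult'') auto
  have "ennreal (\<rho> t * (1/2)) * J \<le> ennreal (t * M)" using fin unfolding e1 e2 .
  then have "J \<le> ennreal (1 / (\<rho> t * (1/2))) * ennreal (t * M)"
    by (rule ennreal_div_le[rotated]) (use pt in simp)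
  also have "\<dots> = ennreal (2 * M * t / \<rho> t)"
    using pt t0 M by (subst ennreal_mult''[symmetric]) (auto simp: field_simps)
  finally show ?thesis unfolding J_def .
qed




lemma nec_phi:
  assumes q\<phi>: "quasiconcave_on R \<phi>" and C: "0 \<le> C"
    and U: "\<And>f t. f \<in> borel_measurable (restrict_space lborel (ivl R)) \<Longrightarrow> t \<in> ivl R \<Longrightarrow>
       S_op R \<phi> (fstarstar R f) t + T_op R \<psi> (fstarstar R f) t
         \<le> ennreal C * (S_op R \<phi> (\<lambda>x. ennreal \<bar>f x\<bar>) t + T_op R \<psi> (\<lambda>x. ennreal \<bar>f x\<bar>) t)"
  shows "B_condition R \<phi>"
proof (rule Bcond_of[OF q\<phi>, of "4*C"])
  show "0 \<le> 4*C" using C by simp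
  fix t assume t: "t \<in> ivl R"
  define g where "g = (\<lambda>x. ennreal \<bar>clampinv \<phi> 0 t x\<bar>)"
  have t0: "0 < t" "ereal t < R" using t unfolding ivl_def by auto
  have pt: "0 < \<phi> t" by (rule qc_pos[OF q\<phi> t])
  have lo: "0 \<le> (0::real)" "0 < t" using t0 by auto
  have anti: "\<forall>x y. x \<in> ivl R \<longrightarrow> y \<in> ivl R \<longrightarrow> x \<le> y \<longrightarrow> g y \<le> g x"
    unfolding g_def by (rule test_anti[OF q\<phi> t lo])
  have Sg: "S_op R \<phi> g t \<le> ennreal (1/\<phi> t) * 1"
    unfolding S_op_def
  proof (rule mult_left_mono[OF SUP_least])
    fix s assume s: "s \<in> {0<..<t}"
    then have si: "s \<in> ivl R" by (intro ivl_down[OF t]) auto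
    have "rearr R g s \<le> g s" by (rule rearr_le[OF anti si])
    also have "g s = ennreal (1/\<phi> s)" unfolding g_def using test_g_in[OF q\<phi> t lo, of s] s by simp
    finally have "ennreal (\<phi> s) * rearr R g s \<le> ennreal (\<phi> s) * ennreal (1/\<phi> s)" by (rule mult_left_mono) simp
    also have "\<dots> = 1" using ennreal_pC[OF qc_pos[OF q\<phi> si], of 1] by simp
    finally show "ennreal (\<phi> s) * rearr R g s \<le> 1" .
  qed simp
  have Tg: "T_op R \<psi> g t \<le> ennreal (1/\<psi> t) * 0"
    unfolding T_op_def
  proof (rule mult_left_mono[OF SUP_least])
    fix s assume s: "s \<in> {s. t < s \<and> ereal s < R}"
    then have si: "s \<in> ivl R" using t0 unfolding ivl_def by auto
    have "rearr R g s \<le> g s" by (rule rearr_le[OF anti si])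
    also have "g s = 0" unfolding g_def using s by (simp add: test_g_out)
    finally show "ennreal (\<psi> s) * rearr R g s \<le> 0" by simp
  qed simp
  have f: "clampinv \<phi> 0 t \<in> borel_measurable (restrict_space lborel (ivl R))"
    by (rule test_meas[OF q\<phi> t]) (use t0 in auto)
  have "S_op R \<phi> (ffsg R g) t \<le> S_op R \<phi> (ffsg R g) t + T_op R \<psi> (ffsg R g) t" by simp
  also have "\<dots> \<le> ennreal C * (S_op R \<phi> g t + T_op R \<psi> g t)"
    using U[OF f t] unfolding fstarstar_eq g_def .
  also have "\<dots> \<le> ennreal C * (ennreal (1/\<phi> t) * 1 + ennreal (1/\<psi> t) * 0)"
    by (intro mult_left_mono add_mono Sg Tg) simp
  also have "\<dots> = ennreal (1/\<phi> t) * ennreal C" by (simp add: ac_simps)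
  finally have up: "S_op R \<phi> (ffsg R g) t \<le> ennreal (1/\<phi> t) * ennreal C" .
  have th: "t/2 \<in> ivl R" using t0 by (intro ivl_down[OF t]) auto
  have "ennreal (1/\<phi> t) * (ennreal (\<phi> (t/2)) * ffsg R g t) \<le> S_op R \<phi> (ffsg R g) t"
    unfolding S_op_def
  proof (rule mult_left_mono)
    have "ennreal (\<phi> (t/2)) * ffsg R g t \<le> ennreal (\<phi> (t/2)) * rearr R (ffsg R g) (t/2)"
      by (rule mult_left_mono[OF rearr_ge[OF ffsg_anti_ivl t]]) (use t0 in auto)
    also have "\<dots> \<le> (SUP s\<in>{0<..<t}. ennreal (\<phi> s) * rearr R (ffsg R g) s)"
      by (rule SUP_upper) (use t0 in auto)
    finally show "ennreal (\<phi> (t/2)) * ffsg R g t \<le> (SUP s\<in>{0<..<t}. ennreal (\<phi> s) * rearr R (ffsg R g) s)" .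
  qed simp
  with up have "ennreal (1/\<phi> t) * (ennreal (\<phi> (t/2)) * ffsg R g t) \<le> ennreal (1/\<phi> t) * ennreal C"
    by (rule order_trans[rotated])
  then have "ennreal (\<phi> t) * (ennreal (1/\<phi> t) * (ennreal (\<phi> (t/2)) * ffsg R g t)) \<le> ennreal (\<phi> t) * (ennreal (1/\<phi> t) * ennreal C)"
    by (rule mult_left_mono) simp
  then have h1: "ennreal (\<phi> (t/2)) * ffsg R g t \<le> ennreal C"
    unfolding ennreal_cancel_mult(1)[OF pt] .
  have h2: "ennreal (\<phi> t) * ffsg R g t \<le> ennreal (2*C)" by (rule double_bound[OF q\<phi> t h1 C])
  have "(\<integral>\<^sup>+ u\<in>{0<..<t/2}. ennreal (1/\<phi> u) \<partial>lborel) \<le> ennreal (2 * (2*C) * t / \<phi> t)"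
    by (rule f_part[OF q\<phi> t lo _]) (use h2 C in \<open>auto simp: g_def\<close>)
  also have "2 * (2*C) * t / \<phi> t = 4 * C * t / \<phi> t" by simp
  finally show "(\<integral>\<^sup>+ u\<in>{0<..<t/2}. ennreal (1/\<phi> u) \<partial>lborel) \<le> ennreal (4 * C * t / \<phi> t)" .
qed

lemma nec_psi_tau:
  assumes q\<phi>: "quasiconcave_on R \<phi>" and q\<psi>: "quasiconcave_on R \<psi>" and C: "0 \<le> C"
    and U: "\<And>f t. f \<in> borel_measurable (restrict_space lborel (ivl R)) \<Longrightarrow> t \<in> ivl R \<Longrightarrow>
       S_op R \<phi> (fstarstar R f) t + T_op R \<psi> (fstarstar R f) t
         \<le> ennreal C * (S_op R \<phi> (\<lambda>x. ennreal \<bar>f x\<bar>) t + T_op R \<psi> (\<lambda>x. ennreal \<bar>f x\<bar>) t)"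
    and t: "t \<in> ivl R" and tau: "0 < \<tau>" "\<tau> < t/2"
  shows "(\<integral>\<^sup>+ u\<in>{\<tau><..<t/2}. ennreal (1/\<psi> u) \<partial>lborel) \<le> ennreal (8 * C * t / \<psi> t)"
proof -
  define g where "g = (\<lambda>x. ennreal \<bar>clampinv \<psi> \<tau> t x\<bar>)"
  have t0: "0 < t" "ereal t < R" using t unfolding ivl_def by auto
  have lo: "0 \<le> \<tau>" "\<tau> < t" using tau by auto
  have ti: "\<tau> \<in> ivl R" using tau by (intro ivl_down[OF t]) auto
  have pt: "0 < \<psi> \<tau>" by (rule qc_pos[OF q\<psi> ti])
  have p\<phi>: "0 < \<phi> \<tau>" by (rule qc_pos[OF q\<phi> ti])
  have anti: "\<forall>x y. x \<in> ivl R \<longrightarrow> y \<in> ivl R \<longrightarrow> x \<le> y \<longrightarrow> g y \<le> g x"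
    unfolding g_def by (rule test_anti[OF q\<psi> t lo])
  have Sg: "S_op R \<phi> g \<tau> \<le> ennreal (1/\<psi> \<tau>)"
  proof -
    have "S_op R \<phi> g \<tau> \<le> ennreal (1/\<phi> \<tau>) * (ennreal (\<phi> \<tau>) * ennreal (1/\<psi> \<tau>))"
      unfolding S_op_def
    proof (rule mult_left_mono[OF SUP_least])
      fix s assume s: "s \<in> {0<..<\<tau>}"
      then have si: "s \<in> ivl R" by (intro ivl_down[OF ti]) auto
      have "rearr R g s \<le> g s" by (rule rearr_le[OF anti si])
      also have "g s = ennreal (1/\<psi> \<tau>)" unfolding g_def using test_g_in[OF q\<psi> t lo, of s] s lo by simp
      finally have r: "rearr R g s \<le> ennreal (1/\<psi> \<tau>)" .
      have "\<phi> s \<le> \<phi> \<tau>" using s t0 ereal_lt_trans[of \<tau> t R] lo by (intro qc_mono[OF q\<phi>]) auto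
      then have "ennreal (\<phi> s) \<le> ennreal (\<phi> \<tau>)" by (rule ennreal_leI)
      then show "ennreal (\<phi> s) * rearr R g s \<le> ennreal (\<phi> \<tau>) * ennreal (1/\<psi> \<tau>)"
        using r by (rule mult_mono) auto
    qed simp
    also have "\<dots> = ennreal (1/\<psi> \<tau>)" by (rule ennreal_cancel_mult(2)[OF p\<phi>])
    finally show ?thesis .
  qed
  have Tg: "T_op R \<psi> g \<tau> \<le> ennreal (1/\<psi> \<tau>) * 1"
    unfolding T_op_def
  proof (rule mult_left_mono[OF SUP_least])
    fix s assume s: "s \<in> {s. \<tau> < s \<and> ereal s < R}"
    then have si: "s \<in> ivl R" using tau unfolding ivl_def by auto
    have r: "rearr R g s \<le> g s" by (rule rearr_le[OF anti si])
    show "ennreal (\<psi> s) * rearr R g s \<le> 1"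
    proof (cases "s < t")
      case True
      have "g s = ennreal (1/\<psi> s)" unfolding g_def using test_g_in[OF q\<psi> t lo, of s] s True tau by simp
      then have "ennreal (\<psi> s) * rearr R g s \<le> ennreal (\<psi> s) * ennreal (1/\<psi> s)"
        using r by (intro mult_left_mono) auto
      also have "\<dots> = 1" using ennreal_pC[OF qc_pos[OF q\<psi> si], of 1] by simp
      finally show ?thesis .
    next
      case False
      have "g s = 0" unfolding g_def using False by (simp add: test_g_out)
      then show ?thesis using r by simp
    qed
  qed simp
  have f: "clampinv \<psi> \<tau> t \<in> borel_measurable (restrict_space lborel (ivl R))"
    by (rule test_meas[OF q\<psi> t]) (use lo in auto)
  have "T_op R \<psi> (ffsg R g) \<tau> \<le> S_op R \<phi> (ffsg R g) \<tau> + T_op R \<psi> (ffsg R g) \<tau>" by simp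
  also have "\<dots> \<le> ennreal C * (S_op R \<phi> g \<tau> + T_op R \<psi> g \<tau>)"
    using U[OF f ti] unfolding fstarstar_eq g_def .
  also have "\<dots> \<le> ennreal C * (ennreal (1/\<psi> \<tau>) + ennreal (1/\<psi> \<tau>) * 1)"
    by (intro mult_left_mono add_mono Sg Tg) simp
  also have "\<dots> = ennreal (1/\<psi> \<tau>) * ennreal (2*C)"
    using C by (simp add: ennreal_mult mult_2 distrib_left ac_simps)
  finally have up: "T_op R \<psi> (ffsg R g) \<tau> \<le> ennreal (1/\<psi> \<tau>) * ennreal (2*C)" .
  have th: "t/2 \<in> ivl R" using t0 by (intro ivl_down[OF t]) auto
  have "ennreal (1/\<psi> \<tau>) * (ennreal (\<psi> (t/2)) * ffsg R g t) \<le> T_op R \<psi> (ffsg R g) \<tau>"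
    unfolding T_op_def
  proof (rule mult_left_mono)
    have "ennreal (\<psi> (t/2)) * ffsg R g t \<le> ennreal (\<psi> (t/2)) * rearr R (ffsg R g) (t/2)"
      by (rule mult_left_mono[OF rearr_ge[OF ffsg_anti_ivl t]]) (use t0 in auto)
    also have "\<dots> \<le> (SUP s\<in>{s. \<tau> < s \<and> ereal s < R}. ennreal (\<psi> s) * rearr R (ffsg R g) s)"
      by (rule SUP_upper) (use tau th in \<open>auto simp: ivl_def\<close>)
    finally show "ennreal (\<psi> (t/2)) * ffsg R g t \<le> (SUP s\<in>{s. \<tau> < s \<and> ereal s < R}. ennreal (\<psi> s) * rearr R (ffsg R g) s)" .
  qed simp
  with up have "ennreal (1/\<psi> \<tau>) * (ennreal (\<psi> (t/2)) * ffsg R g t) \<le> ennreal (1/\<psi> \<tau>) * ennreal (2*C)"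
    by (rule order_trans[rotated])
  then have "ennreal (\<psi> \<tau>) * (ennreal (1/\<psi> \<tau>) * (ennreal (\<psi> (t/2)) * ffsg R g t)) \<le> ennreal (\<psi> \<tau>) * (ennreal (1/\<psi> \<tau>) * ennreal (2*C))"
    by (rule mult_left_mono) simp
  then have h1: "ennreal (\<psi> (t/2)) * ffsg R g t \<le> ennreal (2*C)"
    unfolding ennreal_cancel_mult(1)[OF pt] .
  have h2: "ennreal (\<psi> t) * ffsg R g t \<le> ennreal (2*(2*C))" by (rule double_bound[OF q\<psi> t h1]) (use C in simp)
  have "(\<integral>\<^sup>+ u\<in>{\<tau><..<t/2}. ennreal (1/\<psi> u) \<partial>lborel) \<le> ennreal (2 * (2*(2*C)) * t / \<psi> t)"
    by (rule f_part[OF q\<psi> t lo _]) (use h2 C in \<open>auto simp: g_def\<close>)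
  also have "2 * (2*(2*C)) * t / \<psi> t = 8 * C * t / \<psi> t" by simp
  finally show ?thesis .
qed

lemma nec_psi:
  assumes q\<phi>: "quasiconcave_on R \<phi>" and q\<psi>: "quasiconcave_on R \<psi>" and C: "0 \<le> C"
    and U: "\<And>f t. f \<in> borel_measurable (restrict_space lborel (ivl R)) \<Longrightarrow> t \<in> ivl R \<Longrightarrow>
       S_op R \<phi> (fstarstar R f) t + T_op R \<psi> (fstarstar R f) t
         \<le> ennreal C * (S_op R \<phi> (\<lambda>x. ennreal \<bar>f x\<bar>) t + T_op R \<psi> (\<lambda>x. ennreal \<bar>f x\<bar>) t)"
  shows "B_condition R \<psi>"
proof (rule Bcond_of[OF q\<psi>, of "8*C"])
  show "0 \<le> 8*C" using C by simp
  fix t assume t: "t \<in> ivl R"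
  have t0: "0 < t" "ereal t < R" using t unfolding ivl_def by auto
  let ?h = "\<lambda>u. ennreal (clampinv \<psi> 0 t u)"
  have hm: "?h \<in> borel_measurable lborel" using clampinv_ennreal_meas[OF q\<psi>, of 0 t] t0 by simp
  have "(\<integral>\<^sup>+ u\<in>{0<..<t/2}. ennreal (1/\<psi> u) \<partial>lborel) = (\<integral>\<^sup>+ u\<in>{0<..<t/2}. ?h u \<partial>lborel)"
    using int_clamp[of 0 t "t/2" \<psi>] t0 by simp
  also have "\<dots> \<le> ennreal (8 * C * t / \<psi> t)"
  proof (rule limit_int[OF hm])
    show "0 < t/2" using t0 by simp
    fix \<tau> :: real assume tau: "0 < \<tau>" "\<tau> < t/2"
    have "(\<integral>\<^sup>+ u\<in>{\<tau><..<t/2}. ?h u \<partial>lborel) = (\<integral>\<^sup>+ u\<in>{\<tau><..<t/2}. ennreal (1/\<psi> u) \<partial>lborel)"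
      using int_clamp[of \<tau> t "t/2" \<psi>] tau by simp
    also have "\<dots> \<le> ennreal (8 * C * t / \<psi> t)" by (rule nec_psi_tau[OF q\<phi> q\<psi> C U t tau])
    finally show "(\<integral>\<^sup>+ u\<in>{\<tau><..<t/2}. ?h u \<partial>lborel) \<le> ennreal (8 * C * t / \<psi> t)" .
  qed
  finally show "(\<integral>\<^sup>+ u\<in>{0<..<t/2}. ennreal (1/\<psi> u) \<partial>lborel) \<le> ennreal (8 * C * t / \<psi> t)" .
qed


theorem lemma4p3:
  fixes R :: ereal and \<phi> \<psi> :: "real \<Rightarrow> real"
  assumes "0 < R"
    and "quasiconcave_on R \<phi>" and "quasiconcave_on R \<psi>"
  shows "(\<exists>c C. 0 < c \<and> c \<le> C \<and>
            (\<forall>f :: real \<Rightarrow> real. f \<in> borel_measurable (restrict_space lborel (ivl R)) \<longrightarrow>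
              (\<forall>t\<in>ivl R.
                 ennreal c * (S_op R \<phi> (\<lambda>x. ennreal \<bar>f x\<bar>) t + T_op R \<psi> (\<lambda>x. ennreal \<bar>f x\<bar>) t)
                   \<le> S_op R \<phi> (fstarstar R f) t + T_op R \<psi> (fstarstar R f) t \<and>
                 S_op R \<phi> (fstarstar R f) t + T_op R \<psi> (fstarstar R f) t
                   \<le> ennreal C * (S_op R \<phi> (\<lambda>x. ennreal \<bar>f x\<bar>) t + T_op R \<psi> (\<lambda>x. ennreal \<bar>f x\<bar>) t))))
         \<longleftrightarrow> B_condition R \<phi> \<and> B_condition R \<psi>"
proof
  assume "\<exists>c C. 0 < c \<and> c \<le> C \<and>
            (\<forall>f :: real \<Rightarrow> real. f \<in> borel_measurable (restrict_space lborel (ivl R)) \<longrightarrow>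
              (\<forall>t\<in>ivl R.
                 ennreal c * (S_op R \<phi> (\<lambda>x. ennreal \<bar>f x\<bar>) t + T_op R \<psi> (\<lambda>x. ennreal \<bar>f x\<bar>) t)
                   \<le> S_op R \<phi> (fstarstar R f) t + T_op R \<psi> (fstarstar R f) t \<and>
                 S_op R \<phi> (fstarstar R f) t + T_op R \<psi> (fstarstar R f) t
                   \<le> ennreal C * (S_op R \<phi> (\<lambda>x. ennreal \<bar>f x\<bar>) t + T_op R \<psi> (\<lambda>x. ennreal \<bar>f x\<bar>) t)))"
  then obtain c C where c: "0 < c" "c \<le> C" and H: "\<forall>f :: real \<Rightarrow> real. f \<in> borel_measurable (restrict_space lborel (ivl R)) \<longrightarrow>
              (\<forall>t\<in>ivl R.
                 ennreal c * (S_op R \<phi> (\<lambda>x. ennreal \<bar>f x\<bar>) t + T_op R \<psi> (\<lambda>x. ennreal \<bar>f x\<bar>) t)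
                   \<le> S_op R \<phi> (fstarstar R f) t + T_op R \<psi> (fstarstar R f) t \<and>
                 S_op R \<phi> (fstarstar R f) t + T_op R \<psi> (fstarstar R f) t
                   \<le> ennreal C * (S_op R \<phi> (\<lambda>x. ennreal \<bar>f x\<bar>) t + T_op R \<psi> (\<lambda>x. ennreal \<bar>f x\<bar>) t))"
    by blast
  have C0: "0 \<le> C" using c by simp
  have U: "\<And>f t. f \<in> borel_measurable (restrict_space lborel (ivl R)) \<Longrightarrow> t \<in> ivl R \<Longrightarrow>
       S_op R \<phi> (fstarstar R f) t + T_op R \<psi> (fstarstar R f) t
         \<le> ennreal C * (S_op R \<phi> (\<lambda>x. ennreal \<bar>f x\<bar>) t + T_op R \<psi> (\<lambda>x. ennreal \<bar>f x\<bar>) t)"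
    using H by blast
  show "B_condition R \<phi> \<and> B_condition R \<psi>"
    using nec_phi[OF assms(2) C0 U] nec_psi[OF assms(2,3) C0 U] by blast
next
  assume "B_condition R \<phi> \<and> B_condition R \<psi>"
  then show "\<exists>c C. 0 < c \<and> c \<le> C \<and>
            (\<forall>f :: real \<Rightarrow> real. f \<in> borel_measurable (restrict_space lborel (ivl R)) \<longrightarrow>
              (\<forall>t\<in>ivl R.
                 ennreal c * (S_op R \<phi> (\<lambda>x. ennreal \<bar>f x\<bar>) t + T_op R \<psi> (\<lambda>x. ennreal \<bar>f x\<bar>) t)
                   \<le> S_op R \<phi> (fstarstar R f) t + T_op R \<psi> (fstarstar R f) t \<and>
                 S_op R \<phi> (fstarstar R f) t + T_op R \<psi> (fstarstar R f) t
                   \<le> ennreal C * (S_op R \<phi> (\<lambda>x. ennreal \<bar>f x\<bar>) t + T_op R \<psi> (\<lambda>x. ennreal \<bar>f x\<bar>) t)))"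
    using sufficiency[OF assms(2,3)] by blast
qed

end
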